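(* Let $L$ be an infinite dimensional Lie algebra over a field $F$ generated by elements $a_1,\dots,a_m$ such that every element of the Lie set $S\langle a_1,\dots,a_m\rangle$ is ad-nilpotent. Then $L$ has a just infinite homomorphic image.
   Context: An element $a\in L$ is ad-nilpotent if $\operatorname{ad}(a):x\mapsto[x,a]$ is nilpotent. $S\langle a_1,\dots,a_m\rangle$ is the smallest subset containing the $a_i$ and closed under the bracket. An algebra is just infinite if it is infinite dimensional but every nonzero ideal has finite codimension. *)

theory Defs
  imports Main
begin

record ('k, 'b) lie_alg =
  lcarrier :: "'b set"
  ladd :: "'b \<Rightarrow> 'b \<Rightarrow> 'b"
  lzero :: "'b"
  lsmul :: "'k \<Rightarrow> 'b \<Rightarrow> 'b"
  lbr :: "'b \<Rightarrow> 'b \<Rightarrow> 'b"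

definition lie_algebra :: "('k::field, 'b) lie_alg \<Rightarrow> bool" where
  "lie_algebra L \<longleftrightarrow>
    (let C = lcarrier L; add = ladd L; z = lzero L; sm = lsmul L; br = lbr L in
     z \<in> C \<and>
     (\<forall>x\<in>C. \<forall>y\<in>C. add x y \<in> C) \<and>
     (\<forall>c. \<forall>x\<in>C. sm c x \<in> C) \<and>
     (\<forall>x\<in>C. \<forall>y\<in>C. br x y \<in> C) \<and>
     (\<forall>x\<in>C. \<forall>y\<in>C. \<forall>w\<in>C. add (add x y) w = add x (add y w)) \<and>
     (\<forall>x\<in>C. \<forall>y\<in>C. add x y = add y x) \<and>
     (\<forall>x\<in>C. add z x = x) \<and>
     (\<forall>x\<in>C. \<exists>y\<in>C. add x y = z) \<and>
     (\<forall>c. \<forall>x\<in>C. \<forall>y\<in>C. sm c (add x y) = add (sm c x) (sm c y)) \<and>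
     (\<forall>c d. \<forall>x\<in>C. sm (c + d) x = add (sm c x) (sm d x)) \<and>
     (\<forall>c d. \<forall>x\<in>C. sm (c * d) x = sm c (sm d x)) \<and>
     (\<forall>x\<in>C. sm 1 x = x) \<and>
     (\<forall>x\<in>C. \<forall>y\<in>C. \<forall>w\<in>C. br (add x y) w = add (br x w) (br y w)) \<and>
     (\<forall>x\<in>C. \<forall>y\<in>C. \<forall>w\<in>C. br w (add x y) = add (br w x) (br w y)) \<and>
     (\<forall>c. \<forall>x\<in>C. \<forall>y\<in>C. br (sm c x) y = sm c (br x y)) \<and>
     (\<forall>c. \<forall>x\<in>C. \<forall>y\<in>C. br x (sm c y) = sm c (br x y)) \<and>
     (\<forall>x\<in>C. br x x = z) \<and>
     (\<forall>x\<in>C. \<forall>y\<in>C. \<forall>w\<in>C.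
        add (add (br (br x y) w) (br (br y w) x)) (br (br w x) y) = z))"

inductive_set lspan :: "('k, 'b) lie_alg \<Rightarrow> 'b set \<Rightarrow> 'b set"
  for L :: "('k, 'b) lie_alg" and A :: "'b set" where
  span_zero: "lzero L \<in> lspan L A"
| span_base: "a \<in> A \<Longrightarrow> a \<in> lspan L A"
| span_add: "x \<in> lspan L A \<Longrightarrow> y \<in> lspan L A \<Longrightarrow> ladd L x y \<in> lspan L A"
| span_smul: "x \<in> lspan L A \<Longrightarrow> lsmul L c x \<in> lspan L A"

inductive_set lie_gen :: "('k, 'b) lie_alg \<Rightarrow> 'b set \<Rightarrow> 'b set"
  for L :: "('k, 'b) lie_alg" and A :: "'b set" where
  gen_zero: "lzero L \<in> lie_gen L A"
| gen_base: "a \<in> A \<Longrightarrow> a \<in> lie_gen L A"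
| gen_add: "x \<in> lie_gen L A \<Longrightarrow> y \<in> lie_gen L A \<Longrightarrow> ladd L x y \<in> lie_gen L A"
| gen_smul: "x \<in> lie_gen L A \<Longrightarrow> lsmul L c x \<in> lie_gen L A"
| gen_br: "x \<in> lie_gen L A \<Longrightarrow> y \<in> lie_gen L A \<Longrightarrow> lbr L x y \<in> lie_gen L A"

inductive_set lie_set :: "('k, 'b) lie_alg \<Rightarrow> 'b set \<Rightarrow> 'b set"
  for L :: "('k, 'b) lie_alg" and A :: "'b set" where
  lset_base: "a \<in> A \<Longrightarrow> a \<in> lie_set L A"
| lset_br: "x \<in> lie_set L A \<Longrightarrow> y \<in> lie_set L A \<Longrightarrow> lbr L x y \<in> lie_set L A"

definition ad_nilpotent :: "('k, 'b) lie_alg \<Rightarrow> 'b \<Rightarrow> bool" where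
  "ad_nilpotent L a \<longleftrightarrow>
     (\<exists>n::nat. \<forall>x\<in>lcarrier L. ((\<lambda>y. lbr L y a) ^^ n) x = lzero L)"

definition infinite_dimensional :: "('k, 'b) lie_alg \<Rightarrow> bool" where
  "infinite_dimensional L \<longleftrightarrow>
     \<not> (\<exists>B. finite B \<and> B \<subseteq> lcarrier L \<and> lcarrier L \<subseteq> lspan L B)"

definition lie_ideal :: "('k, 'b) lie_alg \<Rightarrow> 'b set \<Rightarrow> bool" where
  "lie_ideal L I \<longleftrightarrow>
     I \<subseteq> lcarrier L \<and> lzero L \<in> I \<and>
     (\<forall>x\<in>I. \<forall>y\<in>I. ladd L x y \<in> I) \<and>
     (\<forall>c. \<forall>x\<in>I. lsmul L c x \<in> I) \<and>
     (\<forall>x\<in>lcarrier L. \<forall>a\<in>I. lbr L x a \<in> I)"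

definition finite_codim :: "('k, 'b) lie_alg \<Rightarrow> 'b set \<Rightarrow> bool" where
  "finite_codim L I \<longleftrightarrow>
     (\<exists>B. finite B \<and> B \<subseteq> lcarrier L \<and> lcarrier L \<subseteq> lspan L (I \<union> B))"

definition just_infinite :: "('k, 'b) lie_alg \<Rightarrow> bool" where
  "just_infinite L \<longleftrightarrow> infinite_dimensional L \<and>
     (\<forall>I. lie_ideal L I \<and> I \<noteq> {lzero L} \<longrightarrow> finite_codim L I)"

definition lie_hom :: "('k, 'b) lie_alg \<Rightarrow> ('k, 'c) lie_alg \<Rightarrow> ('b \<Rightarrow> 'c) \<Rightarrow> bool" where
  "lie_hom L M f \<longleftrightarrow>
     (\<forall>x\<in>lcarrier L. f x \<in> lcarrier M) \<and>
     (\<forall>x\<in>lcarrier L. \<forall>y\<in>lcarrier L. f (ladd L x y) = ladd M (f x) (f y)) \<and>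
     (\<forall>c. \<forall>x\<in>lcarrier L. f (lsmul L c x) = lsmul M c (f x)) \<and>
     (\<forall>x\<in>lcarrier L. \<forall>y\<in>lcarrier L. f (lbr L x y) = lbr M (f x) (f y))"

end

theory Submission
  imports Defs
begin


locale LA =
  fixes L :: "('k::field, 'b) lie_alg"
  assumes LA: "lie_algebra L"
begin

abbreviation "C \<equiv> lcarrier L"
abbreviation "pl \<equiv> ladd L"
abbreviation "zr \<equiv> lzero L"
abbreviation "sc \<equiv> lsmul L"
abbreviation "bk \<equiv> lbr L"

lemma zr_C[simp]: "zr \<in> C"
  using LA unfolding lie_algebra_def Let_def by (elim conjE) assumption

lemma pl_C_ax: "\<forall>x\<in>C. \<forall>y\<in>C. pl x y \<in> C"
  using LA unfolding lie_algebra_def Let_def by (elim conjE) assumption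

lemma pl_C[simp]: "x \<in> C \<Longrightarrow> y \<in> C \<Longrightarrow> pl x y \<in> C"
  using pl_C_ax by blast

lemma sc_C_ax: "\<forall>c. \<forall>x\<in>C. sc c x \<in> C"
  using LA unfolding lie_algebra_def Let_def by (elim conjE) assumption

lemma sc_C[simp]: "x \<in> C \<Longrightarrow> sc c x \<in> C"
  using sc_C_ax by blast

lemma bk_C_ax: "\<forall>x\<in>C. \<forall>y\<in>C. bk x y \<in> C"
  using LA unfolding lie_algebra_def Let_def by (elim conjE) assumption

lemma bk_C[simp]: "x \<in> C \<Longrightarrow> y \<in> C \<Longrightarrow> bk x y \<in> C"
  using bk_C_ax by blast

lemma pl_assoc_ax: "\<forall>x\<in>C. \<forall>y\<in>C. \<forall>w\<in>C. pl (pl x y) w = pl x (pl y w)"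
  using LA unfolding lie_algebra_def Let_def by (elim conjE) assumption

lemma pl_assoc: "x \<in> C \<Longrightarrow> y \<in> C \<Longrightarrow> w \<in> C \<Longrightarrow> pl (pl x y) w = pl x (pl y w)"
  using pl_assoc_ax by blast

lemma pl_comm_ax: "\<forall>x\<in>C. \<forall>y\<in>C. pl x y = pl y x"
  using LA unfolding lie_algebra_def Let_def by (elim conjE) assumption

lemma pl_comm: "x \<in> C \<Longrightarrow> y \<in> C \<Longrightarrow> pl x y = pl y x"
  using pl_comm_ax by blast

lemma zr_pl_ax: "\<forall>x\<in>C. pl zr x = x"
  using LA unfolding lie_algebra_def Let_def by (elim conjE) assumption

lemma zr_pl[simp]: "x \<in> C \<Longrightarrow> pl zr x = x"
  using zr_pl_ax by blast

lemma pl_inv0: "\<forall>x\<in>C. \<exists>y\<in>C. pl x y = zr"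
  using LA unfolding lie_algebra_def Let_def by (elim conjE) assumption

lemma pl_inv: "x \<in> C \<Longrightarrow> \<exists>y\<in>C. pl x y = zr"
  using pl_inv0 by blast

lemma sc_pl_ax: "\<forall>c. \<forall>x\<in>C. \<forall>y\<in>C. sc c (pl x y) = pl (sc c x) (sc c y)"
  using LA unfolding lie_algebra_def Let_def by (elim conjE) assumption

lemma sc_pl: "x \<in> C \<Longrightarrow> y \<in> C \<Longrightarrow> sc c (pl x y) = pl (sc c x) (sc c y)"
  using sc_pl_ax by blast

lemma sc_add_ax: "\<forall>c d. \<forall>x\<in>C. sc (c + d) x = pl (sc c x) (sc d x)"
  using LA unfolding lie_algebra_def Let_def by (elim conjE) assumption

lemma sc_add: "x \<in> C \<Longrightarrow> sc (c + d) x = pl (sc c x) (sc d x)"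
  using sc_add_ax by blast

lemma sc_mult_ax: "\<forall>c d. \<forall>x\<in>C. sc (c * d) x = sc c (sc d x)"
  using LA unfolding lie_algebra_def Let_def by (elim conjE) assumption

lemma sc_mult: "x \<in> C \<Longrightarrow> sc (c * d) x = sc c (sc d x)"
  using sc_mult_ax by blast

lemma sc_one_ax: "\<forall>x\<in>C. sc 1 x = x"
  using LA unfolding lie_algebra_def Let_def by (elim conjE) assumption

lemma sc_one[simp]: "x \<in> C \<Longrightarrow> sc 1 x = x"
  using sc_one_ax by blast

lemma bk_pl1_ax: "\<forall>x\<in>C. \<forall>y\<in>C. \<forall>w\<in>C. bk (pl x y) w = pl (bk x w) (bk y w)"
  using LA unfolding lie_algebra_def Let_def by (elim conjE) assumption

lemma bk_pl1: "x \<in> C \<Longrightarrow> y \<in> C \<Longrightarrow> w \<in> C \<Longrightarrow> bk (pl x y) w = pl (bk x w) (bk y w)"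
  using bk_pl1_ax by blast

lemma bk_pl2_ax: "\<forall>x\<in>C. \<forall>y\<in>C. \<forall>w\<in>C. bk w (pl x y) = pl (bk w x) (bk w y)"
  using LA unfolding lie_algebra_def Let_def by (elim conjE) assumption

lemma bk_pl2: "x \<in> C \<Longrightarrow> y \<in> C \<Longrightarrow> w \<in> C \<Longrightarrow> bk w (pl x y) = pl (bk w x) (bk w y)"
  using bk_pl2_ax by blast

lemma bk_sc1_ax: "\<forall>c. \<forall>x\<in>C. \<forall>y\<in>C. bk (sc c x) y = sc c (bk x y)"
  using LA unfolding lie_algebra_def Let_def by (elim conjE) assumption

lemma bk_sc1: "x \<in> C \<Longrightarrow> y \<in> C \<Longrightarrow> bk (sc c x) y = sc c (bk x y)"
  using bk_sc1_ax by blast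

lemma bk_sc2_ax: "\<forall>c. \<forall>x\<in>C. \<forall>y\<in>C. bk x (sc c y) = sc c (bk x y)"
  using LA unfolding lie_algebra_def Let_def by (elim conjE) assumption

lemma bk_sc2: "x \<in> C \<Longrightarrow> y \<in> C \<Longrightarrow> bk x (sc c y) = sc c (bk x y)"
  using bk_sc2_ax by blast

lemma bk_self_ax: "\<forall>x\<in>C. bk x x = zr"
  using LA unfolding lie_algebra_def Let_def by (elim conjE) assumption

lemma bk_self[simp]: "x \<in> C \<Longrightarrow> bk x x = zr"
  using bk_self_ax by blast

lemma jacobi_ax: "\<forall>x\<in>C. \<forall>y\<in>C. \<forall>w\<in>C.
        pl (pl (bk (bk x y) w) (bk (bk y w) x)) (bk (bk w x) y) = zr"
  using LA unfolding lie_algebra_def Let_def by (elim conjE) assumption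

lemma jacobi: "x \<in> C \<Longrightarrow> y \<in> C \<Longrightarrow> w \<in> C \<Longrightarrow> pl (pl (bk (bk x y) w) (bk (bk y w) x)) (bk (bk w x) y) = zr"
  using jacobi_ax by blast

lemma pl_lcomm: "x \<in> C \<Longrightarrow> y \<in> C \<Longrightarrow> w \<in> C \<Longrightarrow> pl x (pl y w) = pl y (pl x w)"
  by (metis pl_assoc pl_comm)

lemmas pl_ac = pl_assoc pl_comm pl_lcomm

lemma pl_zr[simp]: "x \<in> C \<Longrightarrow> pl x zr = x"
  by (metis pl_comm zr_C zr_pl)

lemma pl_cancel: assumes "x \<in> C" "y \<in> C" "w \<in> C" "pl x y = pl x w" shows "y = w"
proof -
  obtain v where v: "v \<in> C" "pl x v = zr" using pl_inv assms by blast
  have "y = pl (pl v x) y" using v assms by (simp add: pl_comm)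
  also have "\<dots> = pl v (pl x w)" using v assms by (simp add: pl_assoc)
  also have "\<dots> = w" using v assms by (simp add: pl_assoc[symmetric] pl_comm)
  finally show ?thesis .
qed

lemma idem_zr: "x \<in> C \<Longrightarrow> pl x x = x \<Longrightarrow> x = zr"
  using pl_cancel[of x x zr] by simp

lemma sc_zero[simp]: "x \<in> C \<Longrightarrow> sc 0 x = zr"
  by (rule idem_zr) (auto simp: sc_add[of x 0 0, symmetric])

lemma sc_zr[simp]: "sc c zr = zr"
  by (rule idem_zr) (auto simp: sc_pl[of zr zr c, symmetric])

lemma bk_zr1[simp]: "x \<in> C \<Longrightarrow> bk zr x = zr"
  by (rule idem_zr) (auto simp: bk_pl1[of zr zr x, symmetric])

lemma bk_zr2[simp]: "x \<in> C \<Longrightarrow> bk x zr = zr"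
  by (rule idem_zr) (auto simp: bk_pl2[of zr zr x, symmetric])

lemma pl_neg: "x \<in> C \<Longrightarrow> pl x (sc (-1) x) = zr"
  using sc_add[of x 1 "-1"] by simp

lemma neg_pl: "x \<in> C \<Longrightarrow> pl (sc (-1) x) x = zr"
  using pl_neg pl_comm by simp

lemma bk_anti: assumes "x \<in> C" "y \<in> C" shows "bk x y = sc (-1) (bk y x)"
proof -
  have "zr = bk (pl x y) (pl x y)" using assms by simp
  also have "\<dots> = pl (bk x (pl x y)) (bk y (pl x y))" by (rule bk_pl1) (simp_all add: assms)
  also have "\<dots> = pl (pl (bk x x) (bk x y)) (pl (bk y x) (bk y y))"
    by (simp only: bk_pl2[OF assms assms(1)] bk_pl2[OF assms assms(2)])
  also have "\<dots> = pl (bk x y) (bk y x)" using assms by simp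
  finally have z: "zr = pl (bk x y) (bk y x)" .
  have c: "pl (bk y x) (bk x y) = pl (bk x y) (bk y x)" by (rule pl_comm) (simp_all add: assms)
  have n: "pl (bk y x) (sc (-1) (bk y x)) = zr" by (rule pl_neg) (simp add: assms)
  have "pl (bk y x) (bk x y) = pl (bk y x) (sc (-1) (bk y x))"
    using trans[OF c trans[OF z[symmetric] n[symmetric]]] .
  thus ?thesis by (rule pl_cancel[rotated 3]) (simp_all add: assms)
qed

end



context LA begin

lemma span_C_el: assumes "X \<subseteq> C" "x \<in> lspan L X" shows "x \<in> C"
  using assms(2) by induction (use assms(1) in auto)

lemma span_C: "X \<subseteq> C \<Longrightarrow> lspan L X \<subseteq> C"
  using span_C_el by blast

lemma span_mono_el: assumes "X \<subseteq> Y" "x \<in> lspan L X" shows "x \<in> lspan L Y"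
  using assms(2) by induction (use assms(1) in \<open>auto intro: lspan.intros\<close>)

lemma span_mono: "X \<subseteq> Y \<Longrightarrow> lspan L X \<subseteq> lspan L Y"
  using span_mono_el by blast

lemma span_sub:
  assumes "zr \<in> V" "\<And>x y. x \<in> V \<Longrightarrow> y \<in> V \<Longrightarrow> pl x y \<in> V"
    "\<And>c x. x \<in> V \<Longrightarrow> sc c x \<in> V" "X \<subseteq> V"
  shows "lspan L X \<subseteq> V"
proof
  fix x assume "x \<in> lspan L X"
  thus "x \<in> V" by induction (use assms in auto)
qed

lemma gen_sub:
  assumes "zr \<in> V" "\<And>x y. x \<in> V \<Longrightarrow> y \<in> V \<Longrightarrow> pl x y \<in> V"
    "\<And>c x. x \<in> V \<Longrightarrow> sc c x \<in> V" "\<And>x y. x \<in> V \<Longrightarrow> y \<in> V \<Longrightarrow> bk x y \<in> V" "X \<subseteq> V"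
  shows "lie_gen L X \<subseteq> V"
proof
  fix x assume "x \<in> lie_gen L X"
  thus "x \<in> V" by induction (use assms in auto)
qed

section \<open>Ideals\<close>

lemma idealD:
  assumes "lie_ideal L I"
  shows "I \<subseteq> C" "zr \<in> I" "\<And>x y. x \<in> I \<Longrightarrow> y \<in> I \<Longrightarrow> pl x y \<in> I"
    "\<And>c x. x \<in> I \<Longrightarrow> sc c x \<in> I" "\<And>x a. x \<in> C \<Longrightarrow> a \<in> I \<Longrightarrow> bk x a \<in> I"
  using assms unfolding lie_ideal_def by auto

lemma ideal_bk2:
  assumes "lie_ideal L I" "a \<in> I" "x \<in> C" shows "bk a x \<in> I"
proof -
  have "a \<in> C" using assms idealD(1) by auto
  hence "bk a x = sc (-1) (bk x a)" using bk_anti assms(3) by blast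
  thus ?thesis using idealD(4,5)[OF assms(1)] assms by auto
qed

definition eqv :: "'b set \<Rightarrow> 'b \<Rightarrow> 'b \<Rightarrow> bool" where
  "eqv I x y \<longleftrightarrow> (\<exists>i\<in>I. y = pl x i)"

lemma eqv_refl: "lie_ideal L I \<Longrightarrow> x \<in> C \<Longrightarrow> eqv I x x"
  unfolding eqv_def using idealD(2) by force

lemma eqv_sym:
  assumes I: "lie_ideal L I" and "x \<in> C" "eqv I x y" shows "eqv I y x"
proof -
  obtain i where i: "i \<in> I" "y = pl x i" using assms unfolding eqv_def by auto
  have iC: "i \<in> C" using i idealD(1)[OF I] by auto
  have "pl y (sc (-1) i) = pl x (pl i (sc (-1) i))" using i iC assms by (simp add: pl_assoc)
  also have "\<dots> = x" using iC assms by (simp add: pl_neg)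
  finally show ?thesis unfolding eqv_def using idealD(4)[OF I i(1)] by metis
qed

lemma eqv_trans:
  assumes I: "lie_ideal L I" and "x \<in> C" "eqv I x y" "eqv I y z" shows "eqv I x z"
proof -
  obtain i where i: "i \<in> I" "y = pl x i" using assms unfolding eqv_def by auto
  obtain j where j: "j \<in> I" "z = pl y j" using assms unfolding eqv_def by auto
  have "i \<in> C" "j \<in> C" using i j idealD(1)[OF I] by auto
  hence "z = pl x (pl i j)" using i j assms by (simp add: pl_assoc)
  thus ?thesis unfolding eqv_def using idealD(3)[OF I i(1) j(1)] by metis
qed

lemma eqv_C: "lie_ideal L I \<Longrightarrow> x \<in> C \<Longrightarrow> eqv I x y \<Longrightarrow> y \<in> C"
  unfolding eqv_def using idealD(1) by force

lemma eqv_pl: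
  assumes I: "lie_ideal L I" and C: "x \<in> C" "y \<in> C" and e: "eqv I x x'" "eqv I y y'"
  shows "eqv I (pl x y) (pl x' y')"
proof -
  obtain i where i: "i \<in> I" "x' = pl x i" using e unfolding eqv_def by auto
  obtain j where j: "j \<in> I" "y' = pl y j" using e unfolding eqv_def by auto
  have iC: "i \<in> C" "j \<in> C" using i j idealD(1)[OF I] by auto
  have "pl x' y' = pl (pl x y) (pl i j)" using i j iC C by (simp add: pl_assoc pl_lcomm)
  thus ?thesis unfolding eqv_def using idealD(3)[OF I i(1) j(1)] by metis
qed

lemma eqv_sc:
  assumes I: "lie_ideal L I" and C: "x \<in> C" and e: "eqv I x x'"
  shows "eqv I (sc c x) (sc c x')"
proof -
  obtain i where i: "i \<in> I" "x' = pl x i" using e unfolding eqv_def by auto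
  have iC: "i \<in> C" using i idealD(1)[OF I] by auto
  have "sc c x' = pl (sc c x) (sc c i)" using i iC C by (simp add: sc_pl)
  thus ?thesis unfolding eqv_def using idealD(4)[OF I i(1)] by metis
qed

lemma eqv_bk:
  assumes I: "lie_ideal L I" and C: "x \<in> C" "y \<in> C" and e: "eqv I x x'" "eqv I y y'"
  shows "eqv I (bk x y) (bk x' y')"
proof -
  obtain i where i: "i \<in> I" "x' = pl x i" using e unfolding eqv_def by auto
  obtain j where j: "j \<in> I" "y' = pl y j" using e unfolding eqv_def by auto
  have iC: "i \<in> C" "j \<in> C" using i j idealD(1)[OF I] by auto
  have k1: "bk x j \<in> I" using idealD(5)[OF I C(1) j(1)] .
  have k2: "bk i y \<in> I" using ideal_bk2[OF I i(1) C(2)] .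
  have k3: "bk i j \<in> I" using idealD(5)[OF I iC(1) j(1)] .
  have "bk x' y' = pl (pl (bk x y) (bk i y)) (pl (bk x j) (bk i j))"
    using i j iC C by (simp add: bk_pl1 bk_pl2)
  also have "\<dots> = pl (bk x y) (pl (bk i y) (pl (bk x j) (bk i j)))"
    using iC C by (simp add: pl_assoc)
  finally show ?thesis unfolding eqv_def using idealD(3)[OF I k2 idealD(3)[OF I k1 k3]] by metis
qed

definition cls :: "'b set \<Rightarrow> 'b \<Rightarrow> 'b set" where
  "cls I x = {y \<in> C. eqv I x y}"

definition rep :: "'b set \<Rightarrow> 'b set \<Rightarrow> 'b" where
  "rep I X = (SOME x. x \<in> C \<and> cls I x = X)"

definition quot :: "'b set \<Rightarrow> ('k, 'b set) lie_alg" where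
  "quot I = \<lparr>lcarrier = cls I ` C, ladd = \<lambda>X Y. cls I (pl (rep I X) (rep I Y)),
     lzero = cls I zr, lsmul = \<lambda>c X. cls I (sc c (rep I X)),
     lbr = \<lambda>X Y. cls I (bk (rep I X) (rep I Y))\<rparr>"

lemma cls_eq:
  assumes I: "lie_ideal L I" and "x \<in> C" "y \<in> C"
  shows "cls I x = cls I y \<longleftrightarrow> eqv I x y"
proof
  assume "cls I x = cls I y"
  moreover have "y \<in> cls I y" using assms eqv_refl unfolding cls_def by auto
  ultimately show "eqv I x y" unfolding cls_def by auto
next
  assume e: "eqv I x y"
  show "cls I x = cls I y"
    unfolding cls_def using e eqv_sym[OF I] eqv_trans[OF I] assms by blast
qed

lemma rep_cls:
  assumes I: "lie_ideal L I" and "x \<in> C"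
  shows "rep I (cls I x) \<in> C" "eqv I x (rep I (cls I x))"
proof -
  have "\<exists>y. y \<in> C \<and> cls I y = cls I x" using assms by auto
  hence r: "rep I (cls I x) \<in> C \<and> cls I (rep I (cls I x)) = cls I x"
    unfolding rep_def by (rule someI_ex)
  thus "rep I (cls I x) \<in> C" by auto
  show "eqv I x (rep I (cls I x))" using r cls_eq[OF I] assms by metis
qed

lemma quot_pl: "lie_ideal L I \<Longrightarrow> x \<in> C \<Longrightarrow> y \<in> C \<Longrightarrow>
   ladd (quot I) (cls I x) (cls I y) = cls I (pl x y)"
  unfolding quot_def using rep_cls eqv_pl cls_eq eqv_sym by simp

lemma quot_sc: "lie_ideal L I \<Longrightarrow> x \<in> C \<Longrightarrow>
   lsmul (quot I) c (cls I x) = cls I (sc c x)"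
  unfolding quot_def using rep_cls eqv_sc cls_eq eqv_sym by simp

lemma quot_bk: "lie_ideal L I \<Longrightarrow> x \<in> C \<Longrightarrow> y \<in> C \<Longrightarrow>
   lbr (quot I) (cls I x) (cls I y) = cls I (bk x y)"
  unfolding quot_def using rep_cls eqv_bk cls_eq eqv_sym by simp

lemma quot_simps: "lcarrier (quot I) = cls I ` C" "lzero (quot I) = cls I zr"
  unfolding quot_def by auto

end



lemma ball_img: "(\<forall>x\<in>f ` A. P x) = (\<forall>x\<in>A. P (f x))" by blast

context LA begin

lemma quot_lie:
  assumes I: "lie_ideal L I"
  shows "lie_algebra (quot I)"
proof -
  note h = quot_pl[OF I] quot_sc[OF I] quot_bk[OF I]
  have inv: "\<forall>X\<in>cls I ` C. \<exists>Y\<in>cls I ` C. ladd (quot I) X Y = cls I zr"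
  proof
    fix X assume "X \<in> cls I ` C"
    then obtain x where x: "x \<in> C" "X = cls I x" by auto
    then obtain y where y: "y \<in> C" "pl x y = zr" using pl_inv by blast
    hence "ladd (quot I) X (cls I y) = cls I zr" using x h(1) by simp
    thus "\<exists>Y\<in>cls I ` C. ladd (quot I) X Y = cls I zr" using y by blast
  qed
  show ?thesis unfolding lie_algebra_def Let_def quot_simps
    apply (intro conjI)
    using inv apply (simp_all add: h ball_img jacobi)
    apply (simp_all add: pl_assoc sc_pl sc_add sc_mult bk_pl1 bk_pl2 bk_sc1 bk_sc2)
    apply (simp_all add: pl_comm)
    done
qed

lemma quot_hom: "lie_ideal L I \<Longrightarrow> lie_hom L (quot I) (cls I)"
  unfolding lie_hom_def quot_simps using quot_pl quot_sc quot_bk by auto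

end



context LA begin

definition ideal_gen :: "'b set \<Rightarrow> 'b set" where
  "ideal_gen F = \<Inter>{I. lie_ideal L I \<and> F \<subseteq> I}"

lemma ideal_C: "lie_ideal L C"
  unfolding lie_ideal_def by auto

lemma ideal_gen_ideal: "F \<subseteq> C \<Longrightarrow> lie_ideal L (ideal_gen F)"
  using ideal_C unfolding ideal_gen_def lie_ideal_def by (auto 0 3)

lemma ideal_gen_sup: "F \<subseteq> ideal_gen F"
  unfolding ideal_gen_def by auto

lemma ideal_gen_least: "lie_ideal L J \<Longrightarrow> F \<subseteq> J \<Longrightarrow> ideal_gen F \<subseteq> J"
  unfolding ideal_gen_def by auto

lemmas span_closed = lspan.span_add lspan.span_smul

lemma span_dec:
  assumes J: "lie_ideal L J" and B: "B \<subseteq> C" and x: "x \<in> lspan L (J \<union> B)"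
  shows "\<exists>j\<in>J. \<exists>s\<in>lspan L B. x = pl j s"
  using x
proof (induction rule: lspan.induct)
  case span_zero
  have "zr = pl zr zr" by simp
  thus ?case using idealD(2)[OF J] lspan.span_zero[of L B] by blast
next
  case (span_base a)
  then show ?case
  proof
    assume a: "a \<in> J"
    hence "a = pl a zr" using idealD(1)[OF J] by auto
    thus ?thesis using a lspan.span_zero[of L B] by blast
  next
    assume a: "a \<in> B"
    hence "a = pl zr a" using B by auto
    thus ?thesis using a lspan.span_base[of a B L] idealD(2)[OF J] by blast
  qed
next
  case (span_add x y)
  then obtain j s j' s' where js: "j \<in> J" "s \<in> lspan L B" "x = pl j s"
    "j' \<in> J" "s' \<in> lspan L B" "y = pl j' s'" by blast
  have C: "j \<in> C" "j' \<in> C" "s \<in> C" "s' \<in> C"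
    using js idealD(1)[OF J] span_C[OF B] by auto
  have "pl x y = pl (pl j j') (pl s s')" using js C by (simp add: pl_assoc pl_lcomm)
  thus ?case using idealD(3)[OF J js(1) js(4)] lspan.span_add[OF js(2) js(5)] by blast
next
  case (span_smul x c)
  then obtain j s where js: "j \<in> J" "s \<in> lspan L B" "x = pl j s" by blast
  have C: "j \<in> C" "s \<in> C"
    using js idealD(1)[OF J] span_C[OF B] by auto
  have "sc c x = pl (sc c j) (sc c s)" using js C by (simp add: sc_pl)
  thus ?case using idealD(4)[OF J js(1)] lspan.span_smul[OF js(2)] by blast
qed

lemma finite_codim_mono: "I \<subseteq> J \<Longrightarrow> finite_codim L I \<Longrightarrow> finite_codim L J"
proof -
  assume IJ: "I \<subseteq> J" and "finite_codim L I"
  then obtain B where B: "finite B" "B \<subseteq> C" "C \<subseteq> lspan L (I \<union> B)"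
    unfolding finite_codim_def by blast
  have "lspan L (I \<union> B) \<subseteq> lspan L (J \<union> B)" using IJ by (intro span_mono) blast
  thus ?thesis unfolding finite_codim_def using B by blast
qed

lemma key:
  assumes A: "finite A" "lie_gen L A = C" and J: "lie_ideal L J" and fc: "finite_codim L J"
  shows "\<exists>F. finite F \<and> F \<subseteq> J \<and> finite_codim L (ideal_gen F)"
proof -
  have AC: "A \<subseteq> C"
  proof
    fix a assume "a \<in> A"
    hence "a \<in> lie_gen L A" by (rule lie_gen.gen_base)
    thus "a \<in> C" using A(2) by simp
  qed
  obtain B where B: "finite B" "B \<subseteq> C" "C \<subseteq> lspan L (J \<union> B)"
    using fc unfolding finite_codim_def by blast
  have SBC: "lspan L B \<subseteq> C" using span_C[OF B(2)] .
  define dec where "dec x = (SOME j. j \<in> J \<and> (\<exists>s\<in>lspan L B. x = pl j s))" for x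
  have dec: "dec x \<in> J \<and> (\<exists>s\<in>lspan L B. x = pl (dec x) s)" if "x \<in> C" for x
  proof -
    have "\<exists>j. j \<in> J \<and> (\<exists>s\<in>lspan L B. x = pl j s)"
      using span_dec[OF J B(2)] B(3) that by blast
    thus ?thesis unfolding dec_def by (rule someI_ex)
  qed
  define G where "G = A \<union> (\<lambda>p. bk (fst p) (snd p)) ` (B \<times> B)"
  have GC: "G \<subseteq> C" using AC B(2) unfolding G_def by (auto simp: subset_iff)
  define F where "F = dec ` G"
  have finF: "finite F" unfolding F_def G_def using A(1) B(1) by auto
  have FJ: "F \<subseteq> J" unfolding F_def using dec GC by auto
  hence FC: "F \<subseteq> C" using idealD(1)[OF J] by auto
  define I where "I = ideal_gen F"
  have I: "lie_ideal L I" unfolding I_def using ideal_gen_ideal[OF FC] .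
  have FI: "F \<subseteq> I" unfolding I_def by (rule ideal_gen_sup)
  have IC: "I \<subseteq> C" using idealD(1)[OF I] .
  have Gdec: "\<exists>i\<in>I. \<exists>s\<in>lspan L B. g = pl i s" if "g \<in> G" for g
    using dec[of g] GC that FI unfolding F_def by blast
  define V where "V = {v. \<exists>i\<in>I. \<exists>s\<in>lspan L B. v = pl i s}"
  have V0: "zr \<in> V"
  proof -
    have "zr = pl zr zr" by simp
    thus ?thesis unfolding V_def using idealD(2)[OF I] lspan.span_zero[of L B] by blast
  qed
  have Vpl: "pl x y \<in> V" if xV: "x \<in> V" "y \<in> V" for x y
  proof -
    obtain i s j t where js: "i \<in> I" "s \<in> lspan L B" "x = pl i s"
      "j \<in> I" "t \<in> lspan L B" "y = pl j t" using xV unfolding V_def by blast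
    have C: "i \<in> C" "j \<in> C" "s \<in> C" "t \<in> C" using js IC SBC by auto
    have "pl x y = pl (pl i j) (pl s t)" using js C by (simp add: pl_assoc pl_lcomm)
    thus ?thesis unfolding V_def using idealD(3)[OF I js(1) js(4)] lspan.span_add[OF js(2) js(5)] by blast
  qed
  have Vsc: "sc c x \<in> V" if xV: "x \<in> V" for x c
  proof -
    obtain i s where js: "i \<in> I" "s \<in> lspan L B" "x = pl i s"
      using xV unfolding V_def by blast
    have C: "i \<in> C" "s \<in> C" using js IC SBC by auto
    have "sc c x = pl (sc c i) (sc c s)" using js C by (simp add: sc_pl)
    thus ?thesis unfolding V_def using idealD(4)[OF I js(1)] lspan.span_smul[OF js(2)] by blast
  qed
  have VC: "V \<subseteq> C" unfolding V_def using IC SBC by (auto simp: subset_iff)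
  have Vbb: "bk b s \<in> V" if "b \<in> B" "s \<in> lspan L B" for b s
    using that(2)
  proof (induction rule: lspan.induct)
    case span_zero
    then show ?case using V0 B(2) that(1) by auto
  next
    case (span_base a)
    hence "bk b a \<in> G" unfolding G_def using that(1) by force
    then show ?case using Gdec unfolding V_def by blast
  next
    case (span_add x y)
    hence "x \<in> C" "y \<in> C" using SBC by auto
    then show ?case using span_add Vpl B(2) that(1) by (simp add: bk_pl2 subset_iff)
  next
    case (span_smul x c)
    hence "x \<in> C" using SBC by auto
    then show ?case using span_smul Vsc B(2) that(1) by (simp add: bk_sc2 subset_iff)
  qed
  have Vss: "bk s t \<in> V" if "s \<in> lspan L B" "t \<in> lspan L B" for s t
    using that(1)
  proof (induction rule: lspan.induct)
    case span_zero
    then show ?case using V0 SBC that(2) by auto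
  next
    case (span_base a)
    then show ?case using Vbb that(2) by auto
  next
    case (span_add x y)
    hence "x \<in> C" "y \<in> C" using SBC by auto
    then show ?case using span_add Vpl SBC that(2) by (simp add: bk_pl1 subset_iff)
  next
    case (span_smul x c)
    hence "x \<in> C" using SBC by auto
    then show ?case using span_smul Vsc SBC that(2) by (simp add: bk_sc1 subset_iff)
  qed
  have Vbk: "bk x y \<in> V" if xV: "x \<in> V" "y \<in> V" for x y
  proof -
    obtain i s j t where js: "i \<in> I" "s \<in> lspan L B" "x = pl i s"
      "j \<in> I" "t \<in> lspan L B" "y = pl j t" using xV unfolding V_def by blast
    have C: "i \<in> C" "j \<in> C" "s \<in> C" "t \<in> C" using js IC SBC by auto
    obtain k u where ku: "k \<in> I" "u \<in> lspan L B" "bk s t = pl k u"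
      using Vss[OF js(2) js(5)] unfolding V_def by blast
    have kC: "k \<in> C" "u \<in> C" using ku IC SBC by auto
    have k1: "bk i j \<in> I" using idealD(5)[OF I C(1) js(4)] .
    have k2: "bk i t \<in> I" using ideal_bk2[OF I js(1) C(4)] .
    have k3: "bk s j \<in> I" using idealD(5)[OF I C(3) js(4)] .
    have "bk x y = pl (pl (bk i j) (bk s j)) (pl (bk i t) (bk s t))"
      using js C by (simp add: bk_pl1 bk_pl2)
    also have "\<dots> = pl (pl (pl (bk i j) (bk s j)) (pl (bk i t) k)) u"
      using ku C kC by (simp add: pl_assoc)
    finally show ?thesis unfolding V_def
      using idealD(3)[OF I idealD(3)[OF I k1 k3] idealD(3)[OF I k2 ku(1)]] ku(2) by blast
  qed
  have AV: "A \<subseteq> V" using Gdec unfolding G_def V_def by blast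
  have "lie_gen L A \<subseteq> V" by (rule gen_sub[OF V0 Vpl Vsc Vbk AV])
  hence "C \<subseteq> V" using A(2) by simp
  moreover have "V \<subseteq> lspan L (I \<union> B)"
  proof
    fix v assume "v \<in> V"
    then obtain i s where js: "i \<in> I" "s \<in> lspan L B" "v = pl i s" unfolding V_def by blast
    have 1: "i \<in> lspan L (I \<union> B)" using js(1) by (intro lspan.span_base) blast
    have 2: "s \<in> lspan L (I \<union> B)" using js(2) span_mono[of B "I \<union> B"] by blast
    show "v \<in> lspan L (I \<union> B)" using lspan.span_add[OF 1 2] js(3) by simp
  qed
  ultimately have "finite_codim L I" unfolding finite_codim_def using B by blast
  thus ?thesis using finF FJ I_def by blast
qed

end



context LA begin

lemma chain_finite_sub:
  assumes "finite F" "F \<subseteq> \<Union>Ch" "Ch \<noteq> {}" "chain\<^sub>\<subseteq> Ch"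
  shows "\<exists>K\<in>Ch. F \<subseteq> K"
  using assms(1,2)
proof (induction F rule: finite_induct)
  case empty
  then show ?case using assms(3) by blast
next
  case (insert a F)
  then obtain K where K: "K \<in> Ch" "F \<subseteq> K" by blast
  obtain K' where K': "K' \<in> Ch" "a \<in> K'" using insert(4) by blast
  have "K \<subseteq> K' \<or> K' \<subseteq> K" using assms(4) K(1) K'(1) unfolding chain_subset_def by blast
  thus ?case
  proof
    assume "K \<subseteq> K'" thus ?thesis using K K' by blast
  next
    assume "K' \<subseteq> K" thus ?thesis using K K' by blast
  qed
qed

lemma union_chain_ideal:
  assumes ne: "Ch \<noteq> {}" and ch: "chain\<^sub>\<subseteq> Ch" and id: "\<And>K. K \<in> Ch \<Longrightarrow> lie_ideal L K"
  shows "lie_ideal L (\<Union>Ch)"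
  unfolding lie_ideal_def
proof (intro conjI ballI allI)
  show "\<Union>Ch \<subseteq> C" using idealD(1)[OF id] by blast
  obtain K0 where "K0 \<in> Ch" using ne by blast
  thus "zr \<in> \<Union>Ch" using idealD(2)[OF id] by blast
next
  fix x y assume x: "x \<in> \<Union>Ch" and y: "y \<in> \<Union>Ch"
  then obtain K1 K2 where K: "K1 \<in> Ch" "x \<in> K1" "K2 \<in> Ch" "y \<in> K2" by blast
  have "K1 \<subseteq> K2 \<or> K2 \<subseteq> K1" using ch K unfolding chain_subset_def by blast
  thus "pl x y \<in> \<Union>Ch"
  proof
    assume "K1 \<subseteq> K2"
    hence "pl x y \<in> K2" using idealD(3)[OF id[OF K(3)]] K by blast
    thus ?thesis using K(3) by blast
  next
    assume "K2 \<subseteq> K1"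
    hence "pl x y \<in> K1" using idealD(3)[OF id[OF K(1)]] K by blast
    thus ?thesis using K(1) by blast
  qed
next
  fix c x assume "x \<in> \<Union>Ch"
  then obtain K where K: "K \<in> Ch" "x \<in> K" by blast
  hence "sc c x \<in> K" using idealD(4)[OF id[OF K(1)]] by blast
  thus "sc c x \<in> \<Union>Ch" using K by blast
next
  fix x a assume x: "x \<in> C" and "a \<in> \<Union>Ch"
  then obtain K where K: "K \<in> Ch" "a \<in> K" by blast
  hence "bk x a \<in> K" using idealD(5)[OF id[OF K(1)] x] by blast
  thus "bk x a \<in> \<Union>Ch" using K by blast
qed

lemma zero_ideal: "lie_ideal L {zr}"
  unfolding lie_ideal_def by auto

lemma zero_not_fc:
  assumes "infinite_dimensional L" shows "\<not> finite_codim L {zr}"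
proof
  assume "finite_codim L {zr}"
  then obtain B where B: "finite B" "B \<subseteq> C" "C \<subseteq> lspan L ({zr} \<union> B)"
    unfolding finite_codim_def by auto
  have "lspan L ({zr} \<union> B) \<subseteq> lspan L B"
    by (rule span_sub) (auto intro: lspan.intros)
  thus False using B assms unfolding infinite_dimensional_def by blast
qed

lemma maximal:
  assumes A: "finite A" "lie_gen L A = C" and inf: "infinite_dimensional L"
  shows "\<exists>I. lie_ideal L I \<and> \<not> finite_codim L I \<and>
     (\<forall>J. lie_ideal L J \<and> I \<subseteq> J \<and> J \<noteq> I \<longrightarrow> finite_codim L J)"
proof -
  define P where "P = {I. lie_ideal L I \<and> \<not> finite_codim L I}"
  have "\<forall>Ch\<in>chains P. \<exists>U\<in>P. \<forall>X\<in>Ch. X \<subseteq> U"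
  proof
    fix Ch assume Ch: "Ch \<in> chains P"
    show "\<exists>U\<in>P. \<forall>X\<in>Ch. X \<subseteq> U"
    proof (cases "Ch = {}")
      case True
      then show ?thesis using zero_ideal zero_not_fc[OF inf] unfolding P_def by blast
    next
      case False
      have sub: "Ch \<subseteq> P" and ch: "chain\<^sub>\<subseteq> Ch" using Ch unfolding chains_def by auto
      have id: "lie_ideal L (\<Union>Ch)"
        by (rule union_chain_ideal[OF False ch]) (use sub in \<open>auto simp: P_def\<close>)
      have "\<not> finite_codim L (\<Union>Ch)"
      proof
        assume "finite_codim L (\<Union>Ch)"
        then obtain F where F: "finite F" "F \<subseteq> \<Union>Ch" "finite_codim L (ideal_gen F)"
          using key[OF A id] by blast
        then obtain K where K: "K \<in> Ch" "F \<subseteq> K" using chain_finite_sub False ch by blast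
        have "lie_ideal L K" "\<not> finite_codim L K" using K sub unfolding P_def by auto
        thus False using ideal_gen_least[of K F] K F finite_codim_mono by blast
      qed
      thus ?thesis using id unfolding P_def by blast
    qed
  qed
  from Zorn_Lemma2[OF this] obtain I where I: "I \<in> P" "\<forall>X\<in>P. I \<subseteq> X \<longrightarrow> X = I" by blast
  thus ?thesis unfolding P_def by blast
qed

lemma push:
  assumes I: "lie_ideal L I" and X: "X \<subseteq> C" and x: "x \<in> lspan L X"
  shows "cls I x \<in> lspan (quot I) (cls I ` X)"
  using x
proof (induction rule: lspan.induct)
  case span_zero
  then show ?case using lspan.span_zero[of "quot I"] quot_simps by metis
next
  case (span_base a)
  then show ?case by (auto intro: lspan.span_base)
next
  case (span_add x y)
  hence "x \<in> C" "y \<in> C" using span_C[OF X] by auto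
  then show ?case using quot_pl[OF I] span_add lspan.span_add by metis
next
  case (span_smul x c)
  hence "x \<in> C" using span_C[OF X] by auto
  then show ?case using quot_sc[OF I] span_smul lspan.span_smul by metis
qed

lemma pull:
  assumes I: "lie_ideal L I" and BB: "BB \<subseteq> cls I ` C" and X: "X \<in> lspan (quot I) BB"
  shows "X \<in> cls I ` C \<and> (\<forall>x\<in>C. cls I x = X \<longrightarrow> x \<in> lspan L (I \<union> rep I ` BB))"
proof -
  let ?S = "lspan L (I \<union> rep I ` BB)"
  have ext: "x \<in> ?S" if h: "y \<in> ?S" "eqv I y x" for x y
  proof -
    obtain i where i: "i \<in> I" "x = pl y i" using h(2) unfolding eqv_def by blast
    have "i \<in> ?S" using i(1) by (intro lspan.span_base) blast
    thus ?thesis using lspan.span_add[OF h(1)] i(2) by simp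
  qed
  show ?thesis using X
  proof (induction rule: lspan.induct)
    case span_zero
    have "x \<in> ?S" if h: "x \<in> C" "cls I x = cls I zr" for x
    proof -
      have "eqv I zr x" using h cls_eq[OF I] eqv_sym[OF I] zr_C by metis
      thus ?thesis using ext lspan.span_zero by blast
    qed
    then show ?case using quot_simps by auto
  next
    case (span_base a)
    then obtain y where y: "y \<in> C" "a = cls I y" using BB by auto
    have r: "rep I a \<in> C" "eqv I y (rep I a)" using rep_cls[OF I y(1)] y by auto
    have ra: "rep I a \<in> ?S" using span_base by (intro lspan.span_base) blast
    have ca: "cls I (rep I a) = a" using r y cls_eq[OF I] by metis
    have "x \<in> ?S" if h: "x \<in> C" "cls I x = a" for x
    proof -
      have "eqv I (rep I a) x" using h ca r cls_eq[OF I] by metis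
      thus ?thesis using ext ra by blast
    qed
    then show ?case using y by auto
  next
    case (span_add X Y)
    then obtain x y where xy: "x \<in> C" "y \<in> C" "X = cls I x" "Y = cls I y"
      "x \<in> ?S" "y \<in> ?S" by blast
    have e: "ladd (quot I) X Y = cls I (pl x y)" using quot_pl[OF I] xy by auto
    have s: "pl x y \<in> ?S" using lspan.span_add[OF xy(5,6)] .
    have "z \<in> ?S" if h: "z \<in> C" "cls I z = ladd (quot I) X Y" for z
    proof -
      have "eqv I (pl x y) z" using h e cls_eq[OF I] xy(1,2) pl_C by metis
      thus ?thesis using ext s by blast
    qed
    then show ?case using e xy by auto
  next
    case (span_smul X c)
    then obtain x where xy: "x \<in> C" "X = cls I x" "x \<in> ?S" by blast
    have e: "lsmul (quot I) c X = cls I (sc c x)" using quot_sc[OF I] xy by auto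
    have s: "sc c x \<in> ?S" using lspan.span_smul[OF xy(3)] .
    have "z \<in> ?S" if h: "z \<in> C" "cls I z = lsmul (quot I) c X" for z
    proof -
      have "eqv I (sc c x) z" using h e cls_eq[OF I] xy(1) sc_C by metis
      thus ?thesis using ext s by blast
    qed
    then show ?case using e xy by auto
  qed
qed

end



lemma span_mono_any: "x \<in> lspan M X \<Longrightarrow> X \<subseteq> Y \<Longrightarrow> x \<in> lspan M Y"
  by (induction rule: lspan.induct) (auto intro: lspan.intros)

context LA begin

lemma main:
  assumes A: "finite A" "lie_gen L A = C" and inf: "infinite_dimensional L"
  shows "\<exists>(M :: ('k, 'b set) lie_alg) f.
           lie_algebra M \<and> lie_hom L M f \<and> f ` C = lcarrier M \<and> just_infinite M"
proof -
  obtain I where I: "lie_ideal L I" "\<not> finite_codim L I"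
    "\<And>J. lie_ideal L J \<Longrightarrow> I \<subseteq> J \<Longrightarrow> J \<noteq> I \<Longrightarrow> finite_codim L J"
    using maximal[OF A inf] by blast
  let ?M = "quot I"
  have IC: "I \<subseteq> C" using idealD(1)[OF I(1)] .
  have clsI: "cls I x = cls I zr" if "x \<in> I" for x
  proof -
    have "x \<in> C" using that IC by auto
    moreover have "eqv I zr x" unfolding eqv_def using that IC by force
    ultimately have "cls I zr = cls I x" using cls_eq[OF I(1) zr_C] by simp
    thus ?thesis by simp
  qed
  have infM: "infinite_dimensional ?M"
    unfolding infinite_dimensional_def
  proof
    assume "\<exists>BB. finite BB \<and> BB \<subseteq> lcarrier ?M \<and> lcarrier ?M \<subseteq> lspan ?M BB"
    then obtain BB where BB: "finite BB" "BB \<subseteq> cls I ` C" "cls I ` C \<subseteq> lspan ?M BB"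
      using quot_simps by auto
    have "C \<subseteq> lspan L (I \<union> rep I ` BB)"
    proof
      fix x assume x: "x \<in> C"
      hence "cls I x \<in> lspan ?M BB" using BB by auto
      thus "x \<in> lspan L (I \<union> rep I ` BB)" using pull[OF I(1) BB(2)] x by blast
    qed
    moreover have "rep I ` BB \<subseteq> C" using BB(2) rep_cls[OF I(1)] by auto
    ultimately have "finite_codim L I" unfolding finite_codim_def using BB(1) by blast
    thus False using I(2) by blast
  qed
  have ji: "finite_codim ?M J" if J: "lie_ideal ?M J" "J \<noteq> {lzero ?M}" for J
  proof -
    define K where "K = {x \<in> C. cls I x \<in> J}"
    have JM: "J \<subseteq> cls I ` C" "cls I zr \<in> J"
      "\<And>X Y. X \<in> J \<Longrightarrow> Y \<in> J \<Longrightarrow> ladd ?M X Y \<in> J"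
      "\<And>c X. X \<in> J \<Longrightarrow> lsmul ?M c X \<in> J"
      "\<And>X Y. X \<in> cls I ` C \<Longrightarrow> Y \<in> J \<Longrightarrow> lbr ?M X Y \<in> J"
      using J(1) unfolding lie_ideal_def quot_simps by auto
    have K: "lie_ideal L K" unfolding lie_ideal_def
    proof (intro conjI ballI allI)
      show "K \<subseteq> C" unfolding K_def by blast
      show "zr \<in> K" unfolding K_def using JM(2) by simp
    next
      fix x y assume xy: "x \<in> K" "y \<in> K"
      hence C: "x \<in> C" "y \<in> C" "cls I x \<in> J" "cls I y \<in> J" by (auto simp: K_def)
      hence "cls I (pl x y) \<in> J" using JM(3) quot_pl[OF I(1)] by metis
      thus "pl x y \<in> K" using C by (simp add: K_def)
    next
      fix c x assume "x \<in> K"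
      hence C: "x \<in> C" "cls I x \<in> J" by (auto simp: K_def)
      hence "cls I (sc c x) \<in> J" using JM(4) quot_sc[OF I(1)] by metis
      thus "sc c x \<in> K" using C by (simp add: K_def)
    next
      fix x a assume x: "x \<in> C" and "a \<in> K"
      hence C: "a \<in> C" "cls I a \<in> J" by (auto simp: K_def)
      have "cls I x \<in> cls I ` C" using x by blast
      hence "cls I (bk x a) \<in> J" using JM(5) quot_bk[OF I(1) x C(1)] C(2) by metis
      thus "bk x a \<in> K" using C x by (simp add: K_def)
    qed
    have IK: "I \<subseteq> K" unfolding K_def using IC clsI JM by auto
    obtain X where X: "X \<in> J" "X \<noteq> cls I zr" using J(2) JM(2) quot_simps by auto
    then obtain x where x: "x \<in> C" "X = cls I x" using JM by auto
    have "x \<in> K" "x \<notin> I" using x X clsI unfolding K_def by auto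
    hence "K \<noteq> I" by auto
    hence "finite_codim L K" using I(3) K IK by blast
    then obtain B where B: "finite B" "B \<subseteq> C" "C \<subseteq> lspan L (K \<union> B)"
      unfolding finite_codim_def by auto
    have KC: "K \<subseteq> C" unfolding K_def by blast
    have KBC: "K \<union> B \<subseteq> C" using KC B(2) by blast
    have sub: "cls I ` (K \<union> B) \<subseteq> J \<union> cls I ` B" unfolding K_def by blast
    have cov: "cls I ` C \<subseteq> lspan ?M (J \<union> cls I ` B)"
    proof
      fix X assume "X \<in> cls I ` C"
      then obtain x where x: "x \<in> C" "X = cls I x" by blast
      have "x \<in> lspan L (K \<union> B)" using B(3) x(1) by blast
      hence "cls I x \<in> lspan ?M (cls I ` (K \<union> B))" by (rule push[OF I(1) KBC])
      thus "X \<in> lspan ?M (J \<union> cls I ` B)" using span_mono_any[OF _ sub] x(2) by blast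
    qed
    have "finite (cls I ` B)" using B(1) by blast
    moreover have "cls I ` B \<subseteq> lcarrier ?M" using B(2) quot_simps by blast
    ultimately show ?thesis unfolding finite_codim_def using cov quot_simps(1)[of I] by metis
  qed
  have ji': "just_infinite ?M" unfolding just_infinite_def using infM ji by blast
  have "lie_algebra ?M \<and> lie_hom L ?M (cls I) \<and> cls I ` C = lcarrier ?M \<and> just_infinite ?M"
    using quot_lie[OF I(1)] quot_hom[OF I(1)] ji' quot_simps(1)[of I] by simp
  thus ?thesis by blast
qed

end


theorem lemma4:
  fixes L :: "('k::field, 'b) lie_alg" and A :: "'b set"
  assumes "lie_algebra L"
    and "infinite_dimensional L"
    and "finite A" and "A \<subseteq> lcarrier L"
    and "lie_gen L A = lcarrier L"
    and "\<forall>s\<in>lie_set L A. ad_nilpotent L s"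
  shows "\<exists>(M :: ('k, 'b set) lie_alg) (f :: 'b \<Rightarrow> 'b set).
           lie_algebra M \<and> lie_hom L M f \<and> f ` lcarrier L = lcarrier M \<and> just_infinite M"
proof -
  interpret LA L using assms(1) by unfold_locales
  show ?thesis using main[OF assms(3) assms(5) assms(2)] by blast
qed

end
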